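(* For integers $m\geq 5$ odd and $n\geq 3$, $\chi_{ld}(C_{m}[\overline{K_{n}}])=3$.
   Context: All graphs are finite, simple and undirected. For a graph $G=(V,E)$ of order $N$ without isolated vertices, a bijection $f\colon V\to\{1,2,\dots,N\}$ is a local distance antimagic labeling if $w(u)\neq w(v)$ for every edge $uv$, where $w(u)=\sum_{x\in N(u)}f(x)$ and $N(u)$ is the open neighborhood of $u$. $\chi_{ld}(G)$ is the minimum number of distinct weights over all local distance antimagic labelings of $G$. $C_m$ is the cycle on $m$ vertices, $\overline{K_n}$ the edgeless graph on $n$ vertices. The lexicographic product $G[H]$ has vertex set $V(G)\times V(H)$, with $(g,h)$ adjacent to $(g',h')$ iff $gg'\in E(G)$, or $g=g'$ and $hh'\in E(H)$. *)

theory Defs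
  imports Main
begin

text \<open>A finite simple graph is given by a finite vertex set V and an adjacency
  relation E (symmetric, irreflexive, within V).\<close>

definition nbhd :: "'a set \<Rightarrow> ('a \<Rightarrow> 'a \<Rightarrow> bool) \<Rightarrow> 'a \<Rightarrow> 'a set" where
  "nbhd V E u = {x \<in> V. E u x}"

definition weight :: "'a set \<Rightarrow> ('a \<Rightarrow> 'a \<Rightarrow> bool) \<Rightarrow> ('a \<Rightarrow> nat) \<Rightarrow> 'a \<Rightarrow> nat" where
  "weight V E f u = (\<Sum>x\<in>nbhd V E u. f x)"

definition ld_labeling :: "'a set \<Rightarrow> ('a \<Rightarrow> 'a \<Rightarrow> bool) \<Rightarrow> ('a \<Rightarrow> nat) \<Rightarrow> bool" where
  "ld_labeling V E f \<longleftrightarrow> bij_betw f V {1..card V} \<and>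
     (\<forall>u\<in>V. \<forall>v\<in>V. E u v \<longrightarrow> weight V E f u \<noteq> weight V E f v)"

definition chi_ld :: "'a set \<Rightarrow> ('a \<Rightarrow> 'a \<Rightarrow> bool) \<Rightarrow> nat" where
  "chi_ld V E = (LEAST k. \<exists>f. ld_labeling V E f \<and> card (weight V E f ` V) = k)"

definition cycle_adj :: "nat \<Rightarrow> nat \<Rightarrow> nat \<Rightarrow> bool" where
  "cycle_adj m i j \<longleftrightarrow> i < m \<and> j < m \<and> ((i + 1) mod m = j \<or> (j + 1) mod m = i)"

definition lex_adj :: "('a \<Rightarrow> 'a \<Rightarrow> bool) \<Rightarrow> ('b \<Rightarrow> 'b \<Rightarrow> bool) \<Rightarrow> 'a \<times> 'b \<Rightarrow> 'a \<times> 'b \<Rightarrow> bool" where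
  "lex_adj EG EH p q \<longleftrightarrow> EG (fst p) (fst q) \<or> (fst p = fst q \<and> EH (snd p) (snd q))"

definition empty_adj :: "nat \<Rightarrow> nat \<Rightarrow> bool" where
  "empty_adj i j \<longleftrightarrow> False"

end

theory Submission
  imports Defs
begin


lemma E_eq: "lex_adj (cycle_adj m) empty_adj p q = cycle_adj m (fst p) (fst q)"
  by (simp add: lex_adj_def empty_adj_def)

lemma pred_mod: assumes "(i::nat) < m" "x < m"
  shows "((x+1) mod m = i) \<longleftrightarrow> (x = (i+m-1) mod m)"
proof (cases "i = 0")
  case True
  have "(i+m-1) mod m = m - 1" using True assms by simp
  moreover have "((x+1) mod m = 0) \<longleftrightarrow> x = m - 1"
  proof (cases "x + 1 < m")
    case True then show ?thesis by simp
  next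
    case False then have "x + 1 = m" using assms(2) by simp
    then show ?thesis by auto
  qed
  ultimately show ?thesis using True by simp
next
  case False
  have h: "i+m-1 = (i-1) + m" using False by simp
  have "(i+m-1) mod m = i - 1" unfolding h mod_add_self2 using assms by simp
  moreover have "((x+1) mod m = i) \<longleftrightarrow> x = i - 1"
  proof
    assume a: "(x+1) mod m = i"
    show "x = i - 1"
    proof (cases "x + 1 < m")
      case True then show ?thesis using a by simp
    next
      case c: False
      then have "x + 1 = m" using assms by simp
      then have "(x+1) mod m = 0" by simp
      then show ?thesis using a False by simp
    qed
  next
    assume "x = i - 1" then show "(x+1) mod m = i" using False assms by simp
  qed
  ultimately show ?thesis by simp
qed

lemma nbhd_eq: assumes "m \<ge> 3" "i < m"
  shows "nbhd ({0..<m} \<times> {0..<n}) (lex_adj (cycle_adj m) empty_adj) (i,j)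
        = {(i+1) mod m, (i+m-1) mod m} \<times> {0..<n}"
proof -
  have c: "\<And>x. x < m \<Longrightarrow> cycle_adj m i x \<longleftrightarrow> x = (i+1) mod m \<or> x = (i+m-1) mod m"
    unfolding cycle_adj_def using pred_mod[OF assms(2)] assms by auto
  have l: "(i+1) mod m < m" "(i+m-1) mod m < m" using assms by auto
  show ?thesis
  proof (rule set_eqI)
    fix x :: "nat \<times> nat"
    obtain a b where x: "x = (a,b)" by fastforce
    show "x \<in> nbhd ({0..<m} \<times> {0..<n}) (lex_adj (cycle_adj m) empty_adj) (i,j) \<longleftrightarrow>
          x \<in> {(i+1) mod m, (i+m-1) mod m} \<times> {0..<n}"
    proof (cases "a < m")
      case True
      then show ?thesis unfolding x nbhd_def E_eq using c[OF True] by auto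
    next
      case False
      then show ?thesis unfolding x nbhd_def E_eq using l by auto
    qed
  qed
qed

lemma two_ne: assumes "(m::nat) \<ge> 3" "i < m" shows "(i+1) mod m \<noteq> (i+m-1) mod m"
proof (cases "i = 0")
  case True then show ?thesis using assms by simp
next
  case False
  have h: "i+m-1 = (i-1) + m" using False by simp
  have e: "(i+m-1) mod m = i - 1" unfolding h mod_add_self2 using assms by simp
  show ?thesis
  proof (cases "i + 1 < m")
    case True then show ?thesis unfolding e using False by simp
  next
    case c: False then have "i + 1 = m" using assms by simp
    then show ?thesis unfolding e using False assms by auto
  qed
qed

definition colsum :: "nat \<Rightarrow> (nat \<times> nat \<Rightarrow> nat) \<Rightarrow> nat \<Rightarrow> nat" where
  "colsum n f k = (\<Sum>j<n. f (k,j))"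

lemma weight_eq: assumes "m \<ge> 3" "i < m"
  shows "weight ({0..<m} \<times> {0..<n}) (lex_adj (cycle_adj m) empty_adj) f (i,j)
        = colsum n f ((i+1) mod m) + colsum n f ((i+m-1) mod m)"
proof -
  have "weight ({0..<m} \<times> {0..<n}) (lex_adj (cycle_adj m) empty_adj) f (i,j)
      = (\<Sum>x\<in>{(i+1) mod m, (i+m-1) mod m} \<times> {0..<n}. f x)"
    unfolding weight_def nbhd_eq[OF assms] by simp
  also have "\<dots> = (\<Sum>a\<in>{(i+1) mod m, (i+m-1) mod m}. \<Sum>b\<in>{0..<n}. f (a,b))"
    using sum.cartesian_product[of "\<lambda>a b. f (a,b)"] by (simp add: case_prod_beta')
  also have "\<dots> = colsum n f ((i+1) mod m) + colsum n f ((i+m-1) mod m)"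
    using two_ne[OF assms] unfolding colsum_def by (simp add: atLeast0LessThan)
  finally show ?thesis .
qed

lemma lower: assumes m: "m \<ge> 3" "odd m" and n: "n \<ge> 1"
  and f: "ld_labeling ({0..<m} \<times> {0..<n}) (lex_adj (cycle_adj m) empty_adj) f"
  shows "3 \<le> card (weight ({0..<m} \<times> {0..<n}) (lex_adj (cycle_adj m) empty_adj) f ` ({0..<m} \<times> {0..<n}))"
proof (rule ccontr)
  define V where "V = {0..<m} \<times> {0..<n}"
  define E where "E = lex_adj (cycle_adj m) empty_adj"
  define W where "W i = weight V E f (i,0)" for i
  assume "\<not> 3 \<le> card (weight ({0..<m} \<times> {0..<n}) (lex_adj (cycle_adj m) empty_adj) f ` ({0..<m} \<times> {0..<n}))"
  then have c: "card (weight V E f ` V) < 3" unfolding V_def E_def by simp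
  have Wj: "weight V E f (i,j) = W i" if "i < m" for i j
    unfolding W_def V_def E_def weight_eq[OF m(1) that] by simp
  have img: "weight V E f ` V = W ` {0..<m}"
  proof
    show "weight V E f ` V \<subseteq> W ` {0..<m}"
    proof
      fix w assume "w \<in> weight V E f ` V"
      then obtain a b where ab: "(a,b) \<in> V" "w = weight V E f (a,b)" by auto
      then have "a < m" unfolding V_def by auto
      then show "w \<in> W ` {0..<m}" using ab Wj by auto
    qed
    show "W ` {0..<m} \<subseteq> weight V E f ` V"
    proof
      fix w assume "w \<in> W ` {0..<m}"
      then obtain i where i: "i < m" "w = W i" by auto
      then have "(i,0) \<in> V" unfolding V_def using n by auto
      moreover have "w = weight V E f (i,0)" using i Wj by simp
      ultimately show "w \<in> weight V E f ` V" by blast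
    qed
  qed
  have adj: "W i \<noteq> W ((i+1) mod m)" if "i < m" for i
  proof -
    have "(i,0) \<in> V" "((i+1) mod m, 0) \<in> V" unfolding V_def using n that m by auto
    moreover have "E (i,0) ((i+1) mod m, 0)" unfolding E_def E_eq cycle_adj_def using that m by auto
    ultimately show ?thesis using f unfolding ld_labeling_def V_def[symmetric] E_def[symmetric] W_def by blast
  qed
  have three: False if "a \<in> {0..<m}" "b \<in> {0..<m}" "d \<in> {0..<m}" "W a \<noteq> W b" "W a \<noteq> W d" "W b \<noteq> W d" for a b d
  proof -
    have "{W a, W b, W d} \<subseteq> W ` {0..<m}" using that by auto
    then have "card {W a, W b, W d} \<le> card (W ` {0..<m})" by (intro card_mono) auto
    moreover have "card {W a, W b, W d} = 3" using that by simp
    ultimately show False using c img by simp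
  qed
  have par: "\<forall>i. i < m \<longrightarrow> (W i = W 0 \<longleftrightarrow> even i)"
  proof
    fix i show "i < m \<longrightarrow> (W i = W 0 \<longleftrightarrow> even i)"
    proof (induction i)
      case 0 then show ?case by simp
    next
      case (Suc i)
      show ?case
      proof
        assume si: "Suc i < m"
        then have ih: "W i = W 0 \<longleftrightarrow> even i" using Suc by simp
        have md: "(i+1) mod m = Suc i" using si by simp
        have ne: "W i \<noteq> W (Suc i)" using adj[of i] si md by simp
        show "W (Suc i) = W 0 \<longleftrightarrow> even (Suc i)"
        proof (cases "even i")
          case True then show ?thesis using ih ne by simp
        next
          case False
          then have "W i \<noteq> W 0" using ih by simp
          have "W (Suc i) = W 0"
          proof (rule ccontr)
            assume "W (Suc i) \<noteq> W 0"
            then show False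
              by (intro three[of 0 i "Suc i"]) (use \<open>W i \<noteq> W 0\<close> ne si in auto)
          qed
          then show ?thesis using False by simp
        qed
      qed
    qed
  qed
  have "m - 1 < m" "even (m - 1)" using m by auto
  then have "W (m-1) = W 0" using par by blast
  moreover have "(m - 1 + 1) mod m = 0" using m by simp
  ultimately show False using adj[of "m-1"] m by simp
qed


definition pii :: "nat \<Rightarrow> nat \<Rightarrow> nat" where
 "pii m i = (if i mod 4 = 0 \<and> i+1 < m then i+1 else if i mod 4 = 1 then i-1 else i)"
definition DD :: "nat \<Rightarrow> nat \<Rightarrow> int" where "DD m i = int (pii m i) - int i"
definition QQ :: "nat \<Rightarrow> nat \<Rightarrow> int" where
 "QQ m i = (if i = m-1 then (if m mod 4 = 1 then 1 else 0) else if i = m-2 then (if m mod 4 = 1 then 0 else 1) else if even i then -1 else 1)"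

lemma DD_alt: "DD m i = (if i mod 4 = 0 \<and> i+1 < m then 1 else if i mod 4 = 1 then -1 else 0)"
  unfolding DD_def pii_def by auto

lemma QQ_alt: "m \<ge> 5 \<Longrightarrow> QQ m i = (if i+1 = m then (if m mod 4 = 1 then 1 else 0) else if i+2 = m then (if m mod 4 = 1 then 0 else 1) else if i mod 4 = 0 \<or> i mod 4 = 2 then -1 else 1)"
proof -
  assume "m \<ge> 5"
  then have "(i = m-1) = (i+1 = m)" "(i = m-2) = (i+2 = m)" by auto
  moreover have "even i = (i mod 4 = 0 \<or> i mod 4 = 2)" by presburger
  ultimately show ?thesis unfolding QQ_def by simp
qed

lemma QQ_main: assumes a: "m \<ge> 5" "odd m" "i < m"
  shows "DD m ((i+1) mod m) + DD m ((i+m-1) mod m) = QQ m i"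
proof -
  have m4: "m mod 4 = 1 \<or> m mod 4 = 3" using a(2) by presburger
  consider "i = 0" | "i + 1 = m" | "0 < i \<and> i + 1 < m" using a by linarith
  then show ?thesis
  proof cases
    case 1
    define k where "k = m - 1"
    have k: "m = k + 1" using a unfolding k_def by simp
    have e: "(i+1) mod m = 1" "(i+m-1) mod m = k" using 1 a k by auto
    have "k mod 4 = 0 \<or> k mod 4 = 2" using m4 k by presburger
    then show ?thesis unfolding e DD_alt QQ_alt[OF a(1)] using 1 a k by auto
  next
    case 2
    define k where "k = m - 2"
    have k: "m = k + 2" using a unfolding k_def by simp
    have e: "(i+1) mod m = 0" using 2 by auto
    have h: "i+m-1 = k + m" using 2 k by auto
    have e2: "(i+m-1) mod m = k" unfolding h mod_add_self2 using k by simp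
    have "(m mod 4 = 1 \<and> k mod 4 = 3) \<or> (m mod 4 = 3 \<and> k mod 4 = 1)" using m4 k by presburger
    then show ?thesis unfolding e e2 DD_alt QQ_alt[OF a(1)] using 2 a k by auto
  next
    case 3
    define j where "j = i - 1"
    have j: "i = j + 1" using 3 unfolding j_def by simp
    have h: "i+m-1 = j + m" using j by auto
    have e: "(i+1) mod m = j+2" using 3 j by auto
    have e2: "(i+m-1) mod m = j" unfolding h mod_add_self2 using 3 j by simp
    have r4: "j mod 4 = 0 \<or> j mod 4 = 1 \<or> j mod 4 = 2 \<or> j mod 4 = 3" by presburger
    have jm: "j + 2 < m" using 3 j by simp
    have key: "DD m (j+2) + DD m j = QQ m i"
    proof (rule disjE[OF r4])
      assume r: "j mod 4 = 0"
      have "(j+1) mod 4 = 1" "(j+2) mod 4 = 2" using r by presburger+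
      moreover have "j+1+2 = m \<Longrightarrow> m mod 4 = 3" using r by presburger
      ultimately have "DD m (j+2) = 0" "DD m j = 1" "QQ m i = 1"
        using jm r unfolding j DD_alt QQ_alt[OF a(1)] by simp_all
      then show ?thesis by simp
    next
      assume "j mod 4 = 1 \<or> j mod 4 = 2 \<or> j mod 4 = 3"
      then show ?thesis
      proof (elim disjE)
        assume r: "j mod 4 = 1"
        have "(j+1) mod 4 = 2" "(j+2) mod 4 = 3" using r by presburger+
        moreover have "j+1+2 \<noteq> m" using r a(2) by presburger
        ultimately have "DD m (j+2) = 0" "DD m j = -1" "QQ m i = -1"
          using jm r unfolding j DD_alt QQ_alt[OF a(1)] by simp_all
        then show ?thesis by simp
      next
        assume r: "j mod 4 = 2"
        have "(j+1) mod 4 = 3" "(j+2) mod 4 = 0" using r by presburger+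
        moreover have "j+1+2 = m \<Longrightarrow> m mod 4 = 1" using r by presburger
        ultimately have "DD m (j+2) = (if j+3 = m then 0 else 1)" "DD m j = 0" "QQ m i = (if j+3 = m then 0 else 1)"
          using jm r unfolding j DD_alt QQ_alt[OF a(1)] by auto
        then show ?thesis by simp
      next
        assume r: "j mod 4 = 3"
        have "(j+1) mod 4 = 0" "(j+2) mod 4 = 1" using r by presburger+
        moreover have "j+1+2 \<noteq> m" using r a(2) by presburger
        ultimately have "DD m (j+2) = -1" "DD m j = 0" "QQ m i = -1"
          using jm r unfolding j DD_alt QQ_alt[OF a(1)] by simp_all
        then show ?thesis by simp
      qed
    qed
    show ?thesis unfolding e e2 by (rule key)
  qed
qed


definition bb :: "nat \<Rightarrow> nat \<Rightarrow> nat" where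
  "bb m i = (if i \<le> m div 2 then i + m div 2 else i - m div 2 - 1)"
definition cc :: "nat \<Rightarrow> nat \<Rightarrow> nat" where
  "cc m i = (if i \<le> m div 2 then 2 * (m div 2) - 2 * i else m + 2 * (m div 2) - 2 * i)"
definition rv :: "nat \<Rightarrow> nat \<Rightarrow> nat" where "rv m i = m - 1 - i"
definition sg :: "nat \<Rightarrow> nat \<Rightarrow> nat \<Rightarrow> nat \<Rightarrow> nat" where
  "sg m n j i = (if j = 0 then pii m i else if j = 1 then (if odd n then bb m i else rv m i)
     else if j = 2 \<and> odd n then cc m i else if even j then i else rv m i)"

lemma bbcc: assumes "odd m" "i < m" shows "bb m i + cc m i + i = 3 * (m div 2)"
proof -
  obtain h where h: "m = 2*h+1" using assms(1) oddE by blast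
  then have "m div 2 = h" by simp
  then show ?thesis unfolding bb_def cc_def using assms h by auto
qed

lemma pii_lt: "i < m \<Longrightarrow> pii m i < m" unfolding pii_def by auto
lemma pii_inv: "i < m \<Longrightarrow> pii m (pii m i) = i"
proof -
  assume a: "i < m"
  have "i mod 4 = 0 \<Longrightarrow> (i+1) mod 4 = 1" by presburger
  moreover have "i mod 4 = 1 \<Longrightarrow> (i-1) mod 4 = 0 \<and> i - 1 + 1 = i"
  proof -
    assume "i mod 4 = 1"
    then have "i \<noteq> 0" by auto
    then obtain k where k: "i = Suc k" by (cases i) auto
    then have "Suc k mod 4 = 1" using \<open>i mod 4 = 1\<close> by simp
    then have "k mod 4 = 0" by presburger
    then show ?thesis using k by simp
  qed
  ultimately show ?thesis unfolding pii_def using a by auto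
qed
lemma pii_inj: "inj_on (pii m) {0..<m}"
  by (rule inj_on_inverseI[where g = "pii m"]) (simp add: pii_inv)

lemma bb_lt: "odd m \<Longrightarrow> i < m \<Longrightarrow> bb m i < m"
  unfolding bb_def by (auto elim!: oddE)
lemma cc_lt: "odd m \<Longrightarrow> i < m \<Longrightarrow> cc m i < m"
  unfolding cc_def by (auto elim!: oddE)
lemma bb_inj: "odd m \<Longrightarrow> inj_on (bb m) {0..<m}"
  unfolding bb_def inj_on_def by (auto elim!: oddE)
lemma cc_inj: assumes "odd m" shows "inj_on (cc m) {0..<m}"
proof -
  obtain h where h: "m = 2*h+1" using assms oddE by blast
  then have hd: "m div 2 = h" by simp
  show ?thesis unfolding inj_on_def cc_def hd
  proof (intro ballI impI)
    fix x y assume xy: "x \<in> {0..<m}" "y \<in> {0..<m}"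
      "(if x \<le> h then 2 * h - 2 * x else m + 2 * h - 2 * x) = (if y \<le> h then 2 * h - 2 * y else m + 2 * h - 2 * y)"
    show "x = y"
    proof (cases "x \<le> h"; cases "y \<le> h")
      assume "x \<le> h" "y \<le> h" then show ?thesis using xy by simp
    next
      assume "\<not> x \<le> h" "\<not> y \<le> h" then show ?thesis using xy h by simp
    next
      assume a: "x \<le> h" "\<not> y \<le> h"
      then have "2 * (h - x) = 2 * (2*h - y) + 1" using xy h by simp
      moreover have "\<And>a b::nat. 2*a \<noteq> 2*b+1" by presburger
      ultimately show ?thesis by blast
    next
      assume a: "\<not> x \<le> h" "y \<le> h"
      then have "2 * (h - y) = 2 * (2*h - x) + 1" using xy h by simp
      moreover have "\<And>a b::nat. 2*a \<noteq> 2*b+1" by presburger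
      ultimately show ?thesis by blast
    qed
  qed
qed

lemma sg_lt: "odd m \<Longrightarrow> i < m \<Longrightarrow> sg m n j i < m"
  unfolding sg_def rv_def using pii_lt[of i m] bb_lt[of m i] cc_lt[of m i] by simp

lemma sg_inj: assumes "odd m" shows "inj_on (sg m n j) {0..<m}"
proof -
  have r: "inj_on (rv m) {0..<m}" unfolding inj_on_def rv_def by auto
  have i: "inj_on (\<lambda>i. i) {0..<m}" by simp
  have "sg m n j = (if j = 0 then pii m else if j = 1 then (if odd n then bb m else rv m)
     else if j = 2 \<and> odd n then cc m else if even j then (\<lambda>i. i) else rv m)"
    unfolding sg_def by (simp add: fun_eq_iff)
  then show ?thesis using pii_inj bb_inj[OF assms] cc_inj[OF assms] r i by simp
qed



definition lab :: "nat \<Rightarrow> nat \<Rightarrow> nat \<times> nat \<Rightarrow> nat" where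
  "lab m n p = m * snd p + sg m n (snd p) (fst p) + 1"

lemma pairs: assumes "i < m" "s \<ge> 2" "odd n \<Longrightarrow> s \<ge> 3"
  shows "(\<Sum>j<s+2*t. sg m n j i) = (\<Sum>j<s. sg m n j i) + t*(m-1)"
proof (induction t)
  case 0 then show ?case by simp
next
  case (Suc t)
  have e: "s + 2 * Suc t = Suc (Suc (s + 2*t))" by simp
  have "sg m n (s+2*t) i + sg m n (Suc (s+2*t)) i = m - 1"
    unfolding sg_def rv_def using assms by auto
  then show ?case unfolding e sum.lessThan_Suc using Suc by simp
qed

definition KK :: "nat \<Rightarrow> nat \<Rightarrow> nat" where
  "KK m n = (if odd n then 3*(m div 2) + ((n-3) div 2)*(m-1) else (m-1) + ((n-2) div 2)*(m-1))"

lemma rowsum: assumes "odd m" "n \<ge> 3" "i < m"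
  shows "(\<Sum>j<n. sg m n j i) + i = KK m n + pii m i"
proof (cases "odd n")
  case True
  define t where "t = (n - 3) div 2"
  have n: "n = 3 + 2*t" using True assms unfolding t_def by presburger
  have l3: "{..<3::nat} = {0,1,2}" by auto
  have b: "(\<Sum>j<3. sg m n j i) = pii m i + bb m i + cc m i"
    unfolding l3 sg_def using True by simp
  have "(\<Sum>j<n. sg m n j i) = (\<Sum>j<3. sg m n j i) + t*(m-1)"
    unfolding n by (rule pairs) (use assms in auto)
  then show ?thesis unfolding b KK_def t_def[symmetric] using True bbcc[OF assms(1,3)] by simp
next
  case False
  define t where "t = (n - 2) div 2"
  have n: "n = 2 + 2*t" using False assms unfolding t_def by presburger
  have l2: "{..<2::nat} = {0,1}" by auto
  have b: "(\<Sum>j<2. sg m n j i) + i = pii m i + (m - 1)"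
    unfolding l2 sg_def rv_def using False assms by simp
  have "(\<Sum>j<n. sg m n j i) = (\<Sum>j<2. sg m n j i) + t*(m-1)"
    unfolding n by (rule pairs) (use assms False in auto)
  then show ?thesis using b unfolding KK_def t_def[symmetric] using False by simp
qed

definition AA :: "nat \<Rightarrow> nat \<Rightarrow> nat" where "AA m n = (\<Sum>j<n. m*j + 1)"

lemma colsum_lab: assumes "odd m" "n \<ge> 3" "k < m"
  shows "int (colsum n (lab m n) k) = int (AA m n) + int (KK m n) + DD m k"
proof -
  have "colsum n (lab m n) k = AA m n + (\<Sum>j<n. sg m n j k)"
  proof -
    have "colsum n (lab m n) k = (\<Sum>j<n. (m*j + 1) + sg m n j k)"
      unfolding colsum_def lab_def by (rule sum.cong) auto
    also have "\<dots> = AA m n + (\<Sum>j<n. sg m n j k)" unfolding AA_def by (rule sum.distrib)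
    finally show ?thesis .
  qed
  then show ?thesis using rowsum[OF assms] unfolding DD_def by linarith
qed

lemma weight_lab: assumes "m \<ge> 5" "odd m" "n \<ge> 3" "i < m"
  shows "int (weight ({0..<m} \<times> {0..<n}) (lex_adj (cycle_adj m) empty_adj) (lab m n) (i,j))
     = 2 * (int (AA m n) + int (KK m n)) + QQ m i"
proof -
  have m3: "m \<ge> 3" using assms by simp
  have "(i+1) mod m < m" "(i+m-1) mod m < m" using assms by auto
  then show ?thesis unfolding weight_eq[OF m3 assms(4)] using colsum_lab[OF assms(2,3)] QQ_main[OF assms(1,2,4)]
    by simp
qed

lemma lab_bij: assumes "odd m" "n \<ge> 1"
  shows "bij_betw (lab m n) ({0..<m} \<times> {0..<n}) {1..card ({0..<m} \<times> {0..<n})}"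
proof -
  have cV: "card ({0..<m} \<times> {0..<n}) = m * n" by (simp add: card_cartesian_product)
  have inj: "inj_on (lab m n) ({0..<m} \<times> {0..<n})"
  proof (rule inj_onI)
    fix p q assume p: "p \<in> {0..<m} \<times> {0..<n}" and q: "q \<in> {0..<m} \<times> {0..<n}" and e: "lab m n p = lab m n q"
    obtain a b where pa: "p = (a,b)" by fastforce
    obtain c d where qc: "q = (c,d)" by fastforce
    have a: "a < m" "c < m" "b < n" "d < n" using p q pa qc by auto
    have s1: "sg m n b a < m" "sg m n d c < m" using sg_lt[OF assms(1)] a by auto
    have e2: "m * b + sg m n b a = m * d + sg m n d c" using e unfolding pa qc lab_def by simp
    have "(m * b + sg m n b a) div m = b" "(m * d + sg m n d c) div m = d" using s1 by auto
    then have bd: "b = d" using e2 by metis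
    then have "sg m n b a = sg m n b c" using e2 by simp
    then have "a = c" using sg_inj[OF assms(1), of n b] a unfolding inj_on_def by auto
    then show "p = q" using pa qc bd by simp
  qed
  have sub: "lab m n ` ({0..<m} \<times> {0..<n}) \<subseteq> {1..m*n}"
  proof
    fix x assume "x \<in> lab m n ` ({0..<m} \<times> {0..<n})"
    then obtain a b where ab: "a < m" "b < n" "x = lab m n (a,b)" by auto
    have "sg m n b a < m" using sg_lt[OF assms(1)] ab by auto
    moreover have "m * b + m \<le> m * n"
    proof -
      have "m * (b + 1) \<le> m * n" using ab by (intro mult_le_mono2) simp
      then show ?thesis by simp
    qed
    ultimately show "x \<in> {1..m*n}" unfolding ab lab_def by simp
  qed
  have "card (lab m n ` ({0..<m} \<times> {0..<n})) = m * n" using card_image[OF inj] cV by simp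
  then have "lab m n ` ({0..<m} \<times> {0..<n}) = {1..m*n}"
    using sub by (intro card_subset_eq) auto
  then show ?thesis unfolding bij_betw_def cV using inj by simp
qed



lemma QQ_prop: assumes "m \<ge> 5" "odd m" "i < m" shows "QQ m i \<noteq> QQ m ((i+1) mod m)"
proof (cases "i + 1 = m")
  case True
  then have "(i+1) mod m = 0" by simp
  moreover have "QQ m 0 = -1" unfolding QQ_alt[OF assms(1)] using assms by simp
  moreover have "QQ m i \<noteq> -1" unfolding QQ_alt[OF assms(1)] using True by simp
  ultimately show ?thesis by simp
next
  case False
  then have e: "(i+1) mod m = i + 1" using assms by simp
  have p: "(i mod 4 = 0 \<or> i mod 4 = 2) \<longleftrightarrow> \<not> ((i+1) mod 4 = 0 \<or> (i+1) mod 4 = 2)" by presburger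
  have q: "i + 3 = m \<Longrightarrow> i mod 4 = 0 \<or> i mod 4 = 2" using assms(2) by presburger
  show ?thesis unfolding e QQ_alt[OF assms(1)] using False p q by auto
qed

lemma QQ_range: "QQ m i \<in> {-1,0,1}" unfolding QQ_def by auto

theorem mainTheorem14:
  fixes m n :: nat
  assumes "m \<ge> 5" and "odd m" and "n \<ge> 3"
  shows "chi_ld ({0..<m} \<times> {0..<n}) (lex_adj (cycle_adj m) empty_adj) = 3"
proof -
  define V where "V = {0..<m} \<times> {0..<n}"
  define E where "E = lex_adj (cycle_adj m) empty_adj"
  define C where "C = 2 * (int (AA m n) + int (KK m n))"
  have wl: "int (weight V E (lab m n) (i,j)) = C + QQ m i" if "i < m" for i j
    unfolding V_def E_def C_def using weight_lab[OF assms that] by simp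
  have ld: "ld_labeling V E (lab m n)"
    unfolding ld_labeling_def
  proof (intro conjI ballI impI)
    show "bij_betw (lab m n) V {1..card V}" unfolding V_def using lab_bij[OF assms(2)] assms(3) by simp
  next
    fix u v assume u: "u \<in> V" and v: "v \<in> V" and e: "E u v"
    obtain a b where ua: "u = (a,b)" by fastforce
    obtain c d where vc: "v = (c,d)" by fastforce
    have ac: "a < m" "c < m" using u v ua vc unfolding V_def by auto
    have "c = (a+1) mod m \<or> a = (c+1) mod m" using e unfolding ua vc E_def E_eq cycle_adj_def by auto
    then have "QQ m a \<noteq> QQ m c" using QQ_prop[OF assms(1,2)] ac by metis
    then have "int (weight V E (lab m n) u) \<noteq> int (weight V E (lab m n) v)"
      unfolding ua vc using wl ac by simp
    then show "weight V E (lab m n) u \<noteq> weight V E (lab m n) v" by simp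
  qed
  have ge: "3 \<le> card (weight V E (lab m n) ` V)"
    using lower[of m n "lab m n"] assms ld unfolding V_def E_def by simp
  have "int ` (weight V E (lab m n) ` V) \<subseteq> (\<lambda>q. C + q) ` {-1,0,1}"
  proof
    fix x assume "x \<in> int ` (weight V E (lab m n) ` V)"
    then obtain a b where ab: "(a,b) \<in> V" "x = int (weight V E (lab m n) (a,b))" by auto
    then have "a < m" unfolding V_def by auto
    then have "x = C + QQ m a" using ab wl by simp
    then show "x \<in> (\<lambda>q. C + q) ` {-1,0,1}" using QQ_range[of m a] by blast
  qed
  then have "card (int ` (weight V E (lab m n) ` V)) \<le> card ((\<lambda>q. C + q) ` {-1,0,1::int})"
    by (intro card_mono) auto
  also have "\<dots> \<le> card {-1,0,1::int}" by (rule card_image_le) simp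
  also have "\<dots> = 3" by simp
  finally have le: "card (weight V E (lab m n) ` V) \<le> 3"
    by (simp add: card_image inj_on_def)
  have c3: "card (weight V E (lab m n) ` V) = 3" using ge le by simp
  have "chi_ld V E = 3"
    unfolding chi_ld_def
  proof (rule Least_equality)
    show "\<exists>f. ld_labeling V E f \<and> card (weight V E f ` V) = 3" using ld c3 by blast
  next
    fix k assume "\<exists>f. ld_labeling V E f \<and> card (weight V E f ` V) = k"
    then obtain f where "ld_labeling V E f" "card (weight V E f ` V) = k" by blast
    then show "3 \<le> k" using lower[of m n f] assms unfolding V_def E_def by simp
  qed
  then show ?thesis unfolding V_def E_def .
qed

end
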